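(* For every integer $d\ge 2$, $\mathcal Q_d$ is dense in $\mathcal A_d$; consequently the spaces $\mathcal P_d$ and $\mathcal O_d$ are also dense in $\mathcal A_d$.
   Context: A polynomial knot is a map $\phi:\mathbb R\to\mathbb R^3$ with real polynomial components which is a smooth embedding ($\phi$ injective and $\phi'(t)\ne0$ for all $t$). For $d\ge2$, $\mathcal A_d$ is the set of polynomial maps $t\mapsto(f(t),g(t),h(t))$ with $\deg f\le d-2$, $\deg g\le d-1$, $\deg h\le d$ (zero polynomial allowed, degree $-\infty$), topologized via the bijection with Euclidean $\mathbb R^{3d}$ sending $(f,g,h)$ to its coefficient vector $(a_0,\dots,a_{d-2},b_0,\dots,b_{d-1},c_0,\dots,c_d)$, where $f=\sum a_it^i$, $g=\sum b_it^i$, $h=\sum c_it^i$. $\mathcal O_d$ is the set of polynomial knots in $\mathcal A_d$; $\mathcal P_d$ is the set of polynomial knots $(f,g,h)$ with $\deg f<\deg g<\deg h\le d$; $\mathcal Q_d$ is the set of polynomial knots $(f,g,h)$ with $\deg f=d-2$, $\deg g=d-1$, $\deg h=d$ exactly. *)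

theory Defs
  imports "HOL-Computational_Algebra.Polynomial" "HOL-Library.Extended_Real"
begin

type_synonym ptriple = "real poly \<times> real poly \<times> real poly"

definition pdeg :: "real poly \<Rightarrow> ereal" where
  "pdeg p = (if p = 0 then -\<infinity> else ereal (real (degree p)))"

definition pmap :: "ptriple \<Rightarrow> real \<Rightarrow> real \<times> real \<times> real" where
  "pmap \<phi> t = (case \<phi> of (f, g, h) \<Rightarrow> (poly f t, poly g t, poly h t))"

definition poly_knot :: "ptriple \<Rightarrow> bool" where
  "poly_knot \<phi> = (case \<phi> of (f, g, h) \<Rightarrow>
     inj (pmap \<phi>) \<and>
     (\<forall>t. (poly (pderiv f) t, poly (pderiv g) t, poly (pderiv h) t) \<noteq> (0, 0, 0)))"

definition A_set :: "nat \<Rightarrow> ptriple set" where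
  "A_set d = {(f, g, h). pdeg f \<le> ereal (real d - 2) \<and> pdeg g \<le> ereal (real d - 1)
                         \<and> pdeg h \<le> ereal (real d)}"

definition O_set :: "nat \<Rightarrow> ptriple set" where
  "O_set d = {\<phi> \<in> A_set d. poly_knot \<phi>}"

definition P_set :: "nat \<Rightarrow> ptriple set" where
  "P_set d = {(f, g, h). poly_knot (f, g, h) \<and> pdeg f < pdeg g \<and> pdeg g < pdeg h
                         \<and> pdeg h \<le> ereal (real d)}"

definition Q_set :: "nat \<Rightarrow> ptriple set" where
  "Q_set d = {(f, g, h). poly_knot (f, g, h) \<and> pdeg f = ereal (real d - 2)
                         \<and> pdeg g = ereal (real d - 1) \<and> pdeg h = ereal (real d)}"

text \<open>Euclidean distance in R^(3d) between the coefficient vectors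
  (a_0..a_{d-2}, b_0..b_{d-1}, c_0..c_d) of two elements of A_d.\<close>
definition coeff_dist :: "nat \<Rightarrow> ptriple \<Rightarrow> ptriple \<Rightarrow> real" where
  "coeff_dist d \<phi> \<psi> = (case \<phi> of (f, g, h) \<Rightarrow> case \<psi> of (f', g', h') \<Rightarrow>
     sqrt ((\<Sum>i<d - 1. (coeff f i - coeff f' i)\<^sup>2)
         + (\<Sum>i<d. (coeff g i - coeff g' i)\<^sup>2)
         + (\<Sum>i\<le>d. (coeff h i - coeff h' i)\<^sup>2)))"

definition dense_in_A :: "nat \<Rightarrow> ptriple set \<Rightarrow> bool" where
  "dense_in_A d S = (S \<subseteq> A_set d \<and>
     (\<forall>\<phi> \<in> A_set d. \<forall>\<epsilon>>0. \<exists>\<psi> \<in> S. coeff_dist d \<phi> \<psi> < \<epsilon>))"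

end

theory Submission imports Defs "HOL-Analysis.Analysis" begin

lemma polyd: "((\<lambda>x. poly p (k x)) has_derivative (\<lambda>h. poly (pderiv p) (k x) * K h)) (at x within S)"
  if "(k has_derivative K) (at x within S)" for k :: "'a::real_normed_vector \<Rightarrow> real"
  using has_derivative_compose[OF that poly_DERIV[of p "k x", unfolded has_field_derivative_def]]
  by simp

lemma polydiff: "k differentiable (at x within S) \<Longrightarrow> (\<lambda>x. poly p (k x)) differentiable (at x within S)"
  for k :: "'a::real_normed_vector \<Rightarrow> real"
  unfolding differentiable_def using polyd by blast

lemma fstdiff: "fst differentiable (at x within S)"
  unfolding differentiable_def by (blast intro: has_derivative_fst[OF has_derivative_ident])
lemma snddiff: "snd differentiable (at x within S)"
  unfolding differentiable_def by (blast intro: has_derivative_snd[OF has_derivative_ident])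

lemma neg1:
  fixes f g h :: "real poly"
  shows "negligible ((\<lambda>x::real\<times>real. (-((poly f (fst x) - poly f (snd x))/(fst x - snd x)),
          -((poly g (fst x) - poly g (snd x))/(fst x - snd x)),
          -((poly h (fst x) - poly h (snd x))/(fst x - snd x)))) ` {x. fst x \<noteq> snd x})"
  apply (rule negligible_differentiable_image_lowdim)
   apply simp
  unfolding differentiable_on_def
  apply (auto intro!: derivative_intros polydiff fstdiff snddiff)
  done

lemma neg2:
  fixes f g h :: "real poly"
  shows "negligible ((\<lambda>t::real. (-poly (pderiv f) t, -poly (pderiv g) t, -poly (pderiv h) t)) ` UNIV)"
  apply (rule negligible_differentiable_image_lowdim)
   apply simp
  unfolding differentiable_on_def
  apply (auto intro!: derivative_intros polydiff)
  done

lemma avoid: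
  fixes N :: "'a::euclidean_space set"
  assumes "negligible N" "r > 0"
  shows "\<exists>v. norm v < r \<and> v \<notin> N"
proof (rule ccontr)
  assume "\<not> ?thesis"
  then have "ball 0 r \<subseteq> N" by (auto simp: dist_norm)
  then have "negligible (ball (0::'a) r)" using assms(1) negligible_subset by blast
  moreover have "\<not> negligible (ball (0::'a) r)"
    by (rule open_not_negligible) (use assms(2) in auto)
  ultimately show False by blast
qed

lemma shift_knot:
  fixes f g h :: "real poly" and a b c :: real
  assumes N1: "(a,b,c) \<notin> (\<lambda>x::real\<times>real. (-((poly f (fst x) - poly f (snd x))/(fst x - snd x)),
          -((poly g (fst x) - poly g (snd x))/(fst x - snd x)),
          -((poly h (fst x) - poly h (snd x))/(fst x - snd x)))) ` {x. fst x \<noteq> snd x}"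
  and N2: "(a,b,c) \<notin> (\<lambda>t::real. (-poly (pderiv f) t, -poly (pderiv g) t, -poly (pderiv h) t)) ` UNIV"
  shows "poly_knot (f + [:0,a:], g + [:0,b:], h + [:0,c:])"
  unfolding poly_knot_def
proof (simp only: prod.case, intro conjI allI)
  show "inj (pmap (f + [:0, a:], g + [:0, b:], h + [:0, c:]))"
  proof (rule injI, rule ccontr)
    fix t u assume eq: "pmap (f + [:0, a:], g + [:0, b:], h + [:0, c:]) t =
                  pmap (f + [:0, a:], g + [:0, b:], h + [:0, c:]) u" and ne: "t \<noteq> u"
    from eq have e1: "poly f t + a*t = poly f u + a*u" and e2: "poly g t + b*t = poly g u + b*u"
      and e3: "poly h t + c*t = poly h u + c*u"
      by (auto simp: pmap_def algebra_simps)
    have tu: "t - u \<noteq> 0" using ne by simp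
    have "a = -((poly f t - poly f u)/(t-u))" using e1 tu by (simp add: field_simps)
    moreover have "b = -((poly g t - poly g u)/(t-u))" using e2 tu by (simp add: field_simps)
    moreover have "c = -((poly h t - poly h u)/(t-u))" using e3 tu by (simp add: field_simps)
    ultimately have "(a,b,c) \<in> (\<lambda>x::real\<times>real. (-((poly f (fst x) - poly f (snd x))/(fst x - snd x)),
          -((poly g (fst x) - poly g (snd x))/(fst x - snd x)),
          -((poly h (fst x) - poly h (snd x))/(fst x - snd x)))) ` {x. fst x \<noteq> snd x}"
      using ne by (intro image_eqI[where x="(t,u)"]) auto
    then show False using N1 by blast
  qed
next
  fix t
  show "(poly (pderiv (f + [:0, a:])) t, poly (pderiv (g + [:0, b:])) t, poly (pderiv (h + [:0, c:])) t) \<noteq> (0, 0, 0)"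
  proof
    assume "(poly (pderiv (f + [:0, a:])) t, poly (pderiv (g + [:0, b:])) t, poly (pderiv (h + [:0, c:])) t) = (0, 0, 0)"
    then have "(a,b,c) = (-poly (pderiv f) t, -poly (pderiv g) t, -poly (pderiv h) t)"
      by (simp add: pderiv_add pderiv_pCons algebra_simps)
    then show False using N2 by blast
  qed
qed

lemma lin_poly:
  fixes p :: "real poly"
  assumes "degree p = 1"
  shows "inj (poly p)" "\<And>t. poly (pderiv p) t \<noteq> 0"
proof -
  have p: "p = [:coeff p 0, coeff p 1:]"
    by (rule poly_eqI) (auto simp: coeff_pCons coeff_eq_0 assms split: nat.split)
  have c: "coeff p 1 \<noteq> 0" by (metis assms degree_0 leading_coeff_0_iff zero_neq_one)
  show "inj (poly p)"
    by (rule injI, subst (asm) (1 2) p) (use c in simp)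
  fix t show "poly (pderiv p) t \<noteq> 0" by (subst p) (use c in \<open>simp add: pderiv_pCons\<close>)
qed

lemma lin_knot:
  fixes f g h :: "real poly"
  assumes "degree f = 1 \<or> degree g = 1"
  shows "poly_knot (f, g, h)"
  using assms
proof
  assume a: "degree f = 1"
  show ?thesis unfolding poly_knot_def using lin_poly[OF a]
    by (auto simp: inj_def pmap_def)
next
  assume a: "degree g = 1"
  show ?thesis unfolding poly_knot_def using lin_poly[OF a]
    by (auto simp: inj_def pmap_def)
qed

lemma fixdeg:
  fixes p :: "real poly"
  assumes "degree p \<le> n" "\<delta> \<noteq> 0"
  shows "degree (p + monom (if coeff p n = 0 then \<delta> else 0) n) = n"
    "coeff (p + monom (if coeff p n = 0 then \<delta> else 0) n) n \<noteq> 0"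
proof -
  show c: "coeff (p + monom (if coeff p n = 0 then \<delta> else 0) n) n \<noteq> 0"
    using assms by (simp add: coeff_monom)
  have "degree (p + monom (if coeff p n = 0 then \<delta> else 0) n) \<le> n"
    using assms by (intro degree_add_le) (auto intro: order.trans[OF degree_monom_le])
  moreover have "n \<le> degree (p + monom (if coeff p n = 0 then \<delta> else 0) n)"
    using c le_degree by blast
  ultimately show "degree (p + monom (if coeff p n = 0 then \<delta> else 0) n) = n" by simp
qed

lemma shiftdeg:
  fixes q :: "real poly"
  assumes "degree q = n" "n \<ge> 2"
  shows "degree (q + [:0,a:]) = n"
proof -
  have "degree [:0,a:] \<le> 1" by simp
  then show ?thesis using assms by (subst degree_add_eq_left) auto
qed

lemma coeff_pert:
  "\<bar>coeff (monom c n + [:0,a:]) i\<bar> \<le> \<bar>c\<bar> + \<bar>a\<bar>" for c a :: real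
proof -
  have "\<bar>coeff (monom c n) i\<bar> \<le> \<bar>c\<bar>" by auto
  moreover have "\<bar>coeff [:0,a:] i\<bar> \<le> \<bar>a\<bar>" by (cases i) (auto simp: coeff_pCons split: nat.split)
  ultimately show ?thesis by (simp add: coeff_add)
qed


lemma sq_sum_bound:
  fixes x :: "nat \<Rightarrow> real"
  assumes "\<And>i. \<bar>x i\<bar> \<le> \<eta>" "card A \<le> d + 1"
  shows "(\<Sum>i\<in>A. (x i)\<^sup>2) \<le> (real d + 1) * \<eta>\<^sup>2"
proof -
  have "\<And>i. (x i)\<^sup>2 \<le> \<eta>\<^sup>2"
    by (metis abs_ge_zero assms(1) order.trans power2_abs power_mono)
  then have "(\<Sum>i\<in>A. (x i)\<^sup>2) \<le> of_nat (card A) * \<eta>\<^sup>2"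
    by (intro sum_bounded_above) auto
  also have "\<dots> \<le> (real d + 1) * \<eta>\<^sup>2"
    using assms(2) by (intro mult_right_mono) auto
  finally show ?thesis .
qed

lemma dist_bound:
  assumes "\<And>i. \<bar>coeff f i - coeff f' i\<bar> \<le> \<eta>" "\<And>i. \<bar>coeff g i - coeff g' i\<bar> \<le> \<eta>"
    "\<And>i. \<bar>coeff h i - coeff h' i\<bar> \<le> \<eta>"
  shows "coeff_dist d (f,g,h) (f',g',h') \<le> sqrt (3*(real d+1)*\<eta>\<^sup>2)"
proof -
  have "(\<Sum>i<d - 1. (coeff f i - coeff f' i)\<^sup>2) \<le> (real d + 1) * \<eta>\<^sup>2"
    by (rule sq_sum_bound[OF assms(1)]) auto
  moreover have "(\<Sum>i<d. (coeff g i - coeff g' i)\<^sup>2) \<le> (real d + 1) * \<eta>\<^sup>2"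
    by (rule sq_sum_bound[OF assms(2)]) auto
  moreover have "(\<Sum>i\<le>d. (coeff h i - coeff h' i)\<^sup>2) \<le> (real d + 1) * \<eta>\<^sup>2"
    by (rule sq_sum_bound[OF assms(3)]) auto
  ultimately have "(\<Sum>i<d - 1. (coeff f i - coeff f' i)\<^sup>2) + (\<Sum>i<d. (coeff g i - coeff g' i)\<^sup>2)
     + (\<Sum>i\<le>d. (coeff h i - coeff h' i)\<^sup>2) \<le> 3*(real d+1)*\<eta>\<^sup>2" by linarith
  then show ?thesis unfolding coeff_dist_def by (simp add: real_sqrt_le_mono)
qed

lemma pdeg_le: "pdeg p \<le> ereal (real n - k) \<Longrightarrow> p \<noteq> 0 \<Longrightarrow> real (degree p) \<le> real n - k"
  by (simp add: pdeg_def)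

lemma perturb:
  assumes A: "(f,g,h) \<in> A_set d" and d: "d \<ge> 2" and e: "\<epsilon> > 0"
  shows "\<exists>\<psi>\<in>Q_set d. coeff_dist d (f,g,h) \<psi> < \<epsilon>"
proof -
  define \<eta> where "\<eta> = \<epsilon> / (2*(real d+1))"
  define \<delta> where "\<delta> = \<eta>/2"
  have \<eta>: "\<eta> > 0" using e by (simp add: \<eta>_def)
  have \<delta>: "\<delta> > 0" using \<eta> by (simp add: \<delta>_def)
  have degf: "degree f \<le> d - 2"
  proof (cases "f = 0")
    case False
    then have "real (degree f) \<le> real d - 2" using A pdeg_le[of f d 2] by (auto simp: A_set_def)
    then show ?thesis using d by linarith
  qed simp
  have degg: "degree g \<le> d - 1"
  proof (cases "g = 0")
    case False
    then have "real (degree g) \<le> real d - 1" using A pdeg_le[of g d 1] by (auto simp: A_set_def)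
    then show ?thesis using d by linarith
  qed simp
  have degh: "degree h \<le> d"
  proof (cases "h = 0")
    case False
    then have "real (degree h) \<le> real d - 0" using A pdeg_le[of h d 0] by (auto simp: A_set_def)
    then show ?thesis using d by linarith
  qed simp
  define \<alpha> where "\<alpha> = (if coeff f (d-2) = 0 then \<delta> else 0)"
  define \<beta> where "\<beta> = (if coeff g (d-1) = 0 then \<delta> else 0)"
  define \<gamma> where "\<gamma> = (if coeff h d = 0 then \<delta> else 0)"
  define f1 where "f1 = f + monom \<alpha> (d-2)"
  define g1 where "g1 = g + monom \<beta> (d-1)"
  define h1 where "h1 = h + monom \<gamma> d"
  have f1: "degree f1 = d-2" "coeff f1 (d-2) \<noteq> 0"
    using fixdeg[OF degf, of \<delta>] \<delta> unfolding f1_def \<alpha>_def by auto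
  have g1: "degree g1 = d-1" "coeff g1 (d-1) \<noteq> 0"
    using fixdeg[OF degg, of \<delta>] \<delta> unfolding g1_def \<beta>_def by auto
  have h1: "degree h1 = d" "coeff h1 d \<noteq> 0"
    using fixdeg[OF degh, of \<delta>] \<delta> unfolding h1_def \<gamma>_def by auto
  let ?N = "(\<lambda>x::real\<times>real. (-((poly f1 (fst x) - poly f1 (snd x))/(fst x - snd x)),
          -((poly g1 (fst x) - poly g1 (snd x))/(fst x - snd x)),
          -((poly h1 (fst x) - poly h1 (snd x))/(fst x - snd x)))) ` {x. fst x \<noteq> snd x}
     \<union> (\<lambda>t::real. (-poly (pderiv f1) t, -poly (pderiv g1) t, -poly (pderiv h1) t)) ` UNIV"
  have "negligible ?N" using neg1 neg2 negligible_Un by blast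
  then obtain v :: "real\<times>real\<times>real" where v: "norm v < \<delta>" "v \<notin> ?N"
    using avoid \<delta> by blast
  obtain a0 b0 c0 where abc: "v = (a0,b0,c0)" by (metis prod.exhaust)
  have "\<bar>a0\<bar> \<le> norm v" "\<bar>b0\<bar> \<le> norm v" "\<bar>c0\<bar> \<le> norm v"
  proof -
    have n: "norm v = sqrt (a0\<^sup>2 + b0\<^sup>2 + c0\<^sup>2)" unfolding abc by (simp add: norm_Pair)
    show "\<bar>a0\<bar> \<le> norm v" unfolding n by (rule real_le_rsqrt) auto
    show "\<bar>b0\<bar> \<le> norm v" unfolding n by (rule real_le_rsqrt) auto
    show "\<bar>c0\<bar> \<le> norm v" unfolding n by (rule real_le_rsqrt) auto
  qed
  then have small0: "\<bar>a0\<bar> \<le> \<delta>" "\<bar>b0\<bar> \<le> \<delta>" "\<bar>c0\<bar> \<le> \<delta>" using v(1) by auto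
  define a where "a = (if d \<ge> 4 then a0 else 0)"
  define b where "b = (if d \<ge> 4 then b0 else 0)"
  define c where "c = (if d \<ge> 4 then c0 else 0)"
  have small: "\<bar>a\<bar> \<le> \<delta>" "\<bar>b\<bar> \<le> \<delta>" "\<bar>c\<bar> \<le> \<delta>" using small0 \<delta>
    by (auto simp: a_def b_def c_def)
  define f2 where "f2 = f1 + [:0,a:]"
  define g2 where "g2 = g1 + [:0,b:]"
  define h2 where "h2 = h1 + [:0,c:]"
  have f2: "degree f2 = d-2"
  proof (cases "d \<ge> 4")
    case True then show ?thesis using shiftdeg[OF f1(1)] by (simp add: f2_def)
  next
    case False then show ?thesis using f1 by (simp add: f2_def a_def)
  qed
  have g2: "degree g2 = d-1"
  proof (cases "d \<ge> 4")
    case True then show ?thesis using shiftdeg[OF g1(1)] by (simp add: g2_def)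
  next
    case False then show ?thesis using g1 by (simp add: g2_def b_def)
  qed
  have h2: "degree h2 = d"
  proof (cases "d \<ge> 4")
    case True then show ?thesis using shiftdeg[OF h1(1)] by (simp add: h2_def)
  next
    case False then show ?thesis using h1 by (simp add: h2_def c_def)
  qed
  have nz: "f2 \<noteq> 0" "g2 \<noteq> 0" "h2 \<noteq> 0"
  proof -
    show "f2 \<noteq> 0"
    proof
      assume "f2 = 0"
      then have "coeff f2 (d-2) = 0" by simp
      moreover have "coeff f2 (d-2) = coeff f1 (d-2) + coeff [:0,a:] (d-2)" by (simp add: f2_def)
      moreover have "coeff [:0,a:] (d-2) = 0" if "d \<ge> 4"
        using that by (auto simp: coeff_pCons split: nat.split)
      ultimately show False using f1(2) by (cases "d \<ge> 4") (auto simp: a_def)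
    qed
    show "g2 \<noteq> 0" using g2 d by auto
    show "h2 \<noteq> 0" using h2 d by auto
  qed
  have knot: "poly_knot (f2, g2, h2)"
  proof (cases "d \<ge> 4")
    case True
    then show ?thesis unfolding f2_def g2_def h2_def a_def b_def c_def
      using shift_knot[of a0 b0 c0 f1 g1 h1] v(2) abc by auto
  next
    case False
    then have "d = 2 \<or> d = 3" using d by auto
    then have "degree f2 = 1 \<or> degree g2 = 1" using f2 g2 by auto
    then show ?thesis by (rule lin_knot)
  qed
  have inQ: "(f2, g2, h2) \<in> Q_set d"
    unfolding Q_set_def using knot nz f2 g2 h2 d by (auto simp: pdeg_def of_nat_diff)
  have cf: "\<bar>coeff f i - coeff f2 i\<bar> \<le> \<eta>" for i
  proof -
    have "coeff f i - coeff f2 i = - coeff (monom \<alpha> (d-2) + [:0,a:]) i"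
      by (simp add: f2_def f1_def)
    then have "\<bar>coeff f i - coeff f2 i\<bar> \<le> \<bar>\<alpha>\<bar> + \<bar>a\<bar>" using coeff_pert[of \<alpha> "d-2" a i] by simp
    also have "\<dots> \<le> \<eta>" using small \<delta> by (auto simp: \<alpha>_def \<delta>_def)
    finally show ?thesis .
  qed
  have cg: "\<bar>coeff g i - coeff g2 i\<bar> \<le> \<eta>" for i
  proof -
    have "coeff g i - coeff g2 i = - coeff (monom \<beta> (d-1) + [:0,b:]) i"
      by (simp add: g2_def g1_def)
    then have "\<bar>coeff g i - coeff g2 i\<bar> \<le> \<bar>\<beta>\<bar> + \<bar>b\<bar>" using coeff_pert[of \<beta> "d-1" b i] by simp
    also have "\<dots> \<le> \<eta>" using small \<delta> by (auto simp: \<beta>_def \<delta>_def)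
    finally show ?thesis .
  qed
  have ch: "\<bar>coeff h i - coeff h2 i\<bar> \<le> \<eta>" for i
  proof -
    have "coeff h i - coeff h2 i = - coeff (monom \<gamma> d + [:0,c:]) i"
      by (simp add: h2_def h1_def)
    then have "\<bar>coeff h i - coeff h2 i\<bar> \<le> \<bar>\<gamma>\<bar> + \<bar>c\<bar>" using coeff_pert[of \<gamma> d c i] by simp
    also have "\<dots> \<le> \<eta>" using small \<delta> by (auto simp: \<gamma>_def \<delta>_def)
    finally show ?thesis .
  qed
  have "coeff_dist d (f,g,h) (f2,g2,h2) \<le> sqrt (3*(real d+1)*\<eta>\<^sup>2)"
    by (rule dist_bound[OF cf cg ch])
  also have "\<dots> < sqrt (\<epsilon>\<^sup>2)"
  proof -
    have "3*(real d+1)*\<eta>\<^sup>2 = 3 * \<epsilon>\<^sup>2 / (4*(real d+1))"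
    proof -
      have p: "real d + 1 > 0" by simp
      have gen: "3*D*(\<epsilon>/(2*D))\<^sup>2 = 3 * \<epsilon>\<^sup>2 / (4*D)" if "D > 0" for D :: real
        using that by (simp add: power2_eq_square field_simps)
      show ?thesis unfolding \<eta>_def using gen[OF p] by simp
    qed
    also have "\<dots> < \<epsilon>\<^sup>2" using e by (simp add: field_simps add_pos_nonneg)
    finally show ?thesis by (rule real_sqrt_less_mono)
  qed
  also have "\<dots> = \<epsilon>" using e by simp
  finally show ?thesis using inQ by blast
qed


lemma pdeg_lt: "pdeg p < pdeg q \<Longrightarrow> q \<noteq> 0 \<and> (p = 0 \<or> degree p < degree q)"
  by (auto simp: pdeg_def split: if_splits)

lemma P_sub_A: "P_set d \<subseteq> A_set d"
proof
  fix \<phi> assume "\<phi> \<in> P_set d"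
  then obtain f g h where \<phi>: "\<phi> = (f,g,h)" and fg: "pdeg f < pdeg g" and gh: "pdeg g < pdeg h"
    and h: "pdeg h \<le> ereal (real d)" by (auto simp: P_set_def)
  from pdeg_lt[OF gh] have hz: "h \<noteq> 0" and g: "g = 0 \<or> degree g < degree h" by auto
  from pdeg_lt[OF fg] have gz: "g \<noteq> 0" and f: "f = 0 \<or> degree f < degree g" by auto
  have dh: "degree h \<le> d" using h hz by (simp add: pdeg_def)
  have dg: "degree g + 1 \<le> d" using g gz dh by auto
  have "pdeg g \<le> ereal (real d - 1)" using dg gz by (simp add: pdeg_def)
  moreover have "pdeg f \<le> ereal (real d - 2)"
    using f dg by (auto simp: pdeg_def)
  ultimately show "\<phi> \<in> A_set d" using \<phi> h by (auto simp: A_set_def)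
qed

lemma Q_sub_P: "d \<ge> 2 \<Longrightarrow> Q_set d \<subseteq> P_set d"
  by (auto simp: Q_set_def P_set_def)

lemma P_sub_O: "P_set d \<subseteq> O_set d"
  using P_sub_A by (auto simp: O_set_def P_set_def)

theorem mainTheorem13:
  fixes d :: nat
  assumes "d \<ge> 2"
  shows "dense_in_A d (Q_set d) \<and> dense_in_A d (P_set d) \<and> dense_in_A d (O_set d)"
proof -
  have QP: "Q_set d \<subseteq> P_set d" using Q_sub_P assms by blast
  have OA: "O_set d \<subseteq> A_set d" by (auto simp: O_set_def)
  have key: "dense_in_A d S" if "Q_set d \<subseteq> S" "S \<subseteq> A_set d" for S
    unfolding dense_in_A_def
  proof (intro conjI ballI allI impI)
    show "S \<subseteq> A_set d" by fact
    fix \<phi> :: ptriple and \<epsilon> :: real assume "\<phi> \<in> A_set d" "\<epsilon> > 0"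
    then obtain f g h where "\<phi> = (f,g,h)" "(f,g,h) \<in> A_set d" by (cases \<phi>) auto
    then show "\<exists>\<psi>\<in>S. coeff_dist d \<phi> \<psi> < \<epsilon>"
      using perturb[of f g h d \<epsilon>] assms \<open>\<epsilon> > 0\<close> that(1) by blast
  qed
  show ?thesis using key QP P_sub_A P_sub_O OA by blast
qed

end
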